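(* Let $X=(X_1,X_2)$ be an absolutely continuous nonnegative bivariate random vector with differentiable joint distribution function $F$ and finite $\overline\varepsilon^*_i(X;t_1,t_2)$. Fix $i\in\{1,2\}$. If $m_i^X(t_1,t_2)$ is increasing in $t_i$ for $t_1,t_2>0$, then $\overline\varepsilon^*_i(X;t_1,t_2)$ is also increasing in $t_i$.
   Context: Let $F(x_1,x_2)=P(X_1\le x_1,X_2\le x_2)$. For $t_1,t_2>0$ with $F(t_1,t_2)>0$ define the conditional dynamic cumulative past entropies (CDCPE) $$\overline\varepsilon^*_1(X;t_1,t_2)=-\int_0^{t_1}\frac{F(x_1,t_2)}{F(t_1,t_2)}\log\frac{F(x_1,t_2)}{F(t_1,t_2)}dx_1,\qquad \overline\varepsilon^*_2(X;t_1,t_2)=-\int_0^{t_2}\frac{F(t_1,x_2)}{F(t_1,t_2)}\log\frac{F(t_1,x_2)}{F(t_1,t_2)}dx_2.$$ The components of the bivariate expected inactivity time (EIT) are $m_1^X(t_1,t_2)=\frac{1}{F(t_1,t_2)}\int_0^{t_1}F(x_1,t_2)dx_1$ and $m_2^X(t_1,t_2)=\frac{1}{F(t_1,t_2)}\int_0^{t_2}F(t_1,x_2)dx_2$. *)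

theory Defs
  imports "HOL-Probability.Probability"
begin

definition joint_cdf :: "'a measure \<Rightarrow> ('a \<Rightarrow> real) \<Rightarrow> ('a \<Rightarrow> real) \<Rightarrow> real \<Rightarrow> real \<Rightarrow> real" where
  "joint_cdf M X1 X2 x1 x2 = measure M {\<omega> \<in> space M. X1 \<omega> \<le> x1 \<and> X2 \<omega> \<le> x2}"

definition sec :: "(real \<Rightarrow> real \<Rightarrow> real) \<Rightarrow> nat \<Rightarrow> real \<Rightarrow> real \<Rightarrow> real \<Rightarrow> real" where
  "sec F i t1 t2 x = (if i = 1 then F x t2 else F t1 x)"

definition coord :: "nat \<Rightarrow> real \<Rightarrow> real \<Rightarrow> real" where
  "coord i t1 t2 = (if i = 1 then t1 else t2)"

text \<open>Integrand of the CDCPE (log is the natural logarithm; 0 log 0 = 0 since ln 0 = 0).\<close>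
definition cdcpe_integrand :: "(real \<Rightarrow> real \<Rightarrow> real) \<Rightarrow> nat \<Rightarrow> real \<Rightarrow> real \<Rightarrow> real \<Rightarrow> real" where
  "cdcpe_integrand F i t1 t2 x = sec F i t1 t2 x / F t1 t2 * ln (sec F i t1 t2 x / F t1 t2)"

definition cdcpe :: "(real \<Rightarrow> real \<Rightarrow> real) \<Rightarrow> nat \<Rightarrow> real \<Rightarrow> real \<Rightarrow> real" where
  "cdcpe F i t1 t2 = - integral {0..coord i t1 t2} (cdcpe_integrand F i t1 t2)"

definition eit :: "(real \<Rightarrow> real \<Rightarrow> real) \<Rightarrow> nat \<Rightarrow> real \<Rightarrow> real \<Rightarrow> real" where
  "eit F i t1 t2 = integral {0..coord i t1 t2} (sec F i t1 t2) / F t1 t2"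

definition upd_coord :: "nat \<Rightarrow> real \<Rightarrow> real \<Rightarrow> real \<Rightarrow> real \<times> real" where
  "upd_coord i t1 t2 s = (if i = 1 then (s, t2) else (t1, s))"

definition incr_in :: "(real \<Rightarrow> real \<Rightarrow> real) \<Rightarrow> nat \<Rightarrow> (real \<Rightarrow> real \<Rightarrow> real) \<Rightarrow> bool" where
  "incr_in F i g \<longleftrightarrow> (\<forall>t1 t2 s. 0 < t1 \<and> 0 < t2 \<and> F t1 t2 > 0 \<and> coord i t1 t2 \<le> s \<longrightarrow>
      g t1 t2 \<le> case_prod g (upd_coord i t1 t2 s))"

end

theory Submission imports Defs begin

lemma deriv_nonneg_of_right_mono:
  fixes f :: "real \<Rightarrow> real"
  assumes "DERIV f x :> l" and "\<And>h. 0 < h \<Longrightarrow> f x \<le> f (x + h)"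
  shows "0 \<le> l"
proof (rule ccontr)
  assume "\<not> 0 \<le> l"
  then have "l < 0" by simp
  from DERIV_neg_dec_right[OF assms(1) this] obtain d where "d > 0" "\<forall>h>0. h < d \<longrightarrow> f x > f (x + h)" by blast
  then have "f x > f (x + d/2)" by auto
  with assms(2)[of "d/2"] \<open>d>0\<close> show False by simp
qed

lemma xlnx_ge: "0 \<le> (y::real) \<Longrightarrow> y \<le> 1 \<Longrightarrow> -1 \<le> y * ln y"
proof (cases "y = 0")
  case False
  assume "0 \<le> y" "y \<le> 1"
  then have y: "0 < y" using False by simp
  have "ln (1/y) \<le> 1/y - 1" using ln_le_minus_one y by simp
  then have "- ln y \<le> 1/y - 1" using y by (simp add: ln_div)
  then have "y * (- ln y) \<le> y * (1/y - 1)" using y by (intro mult_left_mono) auto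
  then show ?thesis using y \<open>y \<le> 1\<close> by (simp add: algebra_simps)
qed simp

lemma core:
  fixes G :: "real \<Rightarrow> real"
  assumes G0: "\<And>x. 0 \<le> G x" and G1: "\<And>x. G x \<le> 1" and Gm: "mono G"
    and Gd: "\<And>x. 0 < x \<Longrightarrow> G differentiable (at x)"
    and Lint: "\<And>v. 0 < v \<Longrightarrow> 0 < G v \<Longrightarrow> (\<lambda>y. G y / G v * ln (G y / G v)) integrable_on {0..v}"
    and mm: "\<And>t s. 0 < t \<Longrightarrow> 0 < G t \<Longrightarrow> t \<le> s \<Longrightarrow> integral {0..t} G / G t \<le> integral {0..s} G / G s"
    and t: "0 < t" "0 < G t" "t \<le> s"
  shows "- integral {0..t} (\<lambda>y. G y / G t * ln (G y / G t)) \<le> - integral {0..s} (\<lambda>y. G y / G s * ln (G y / G s))"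
proof -
  define A where "A x = integral {0..x} G" for x
  define B where "B x = integral {0..x} (\<lambda>y. G y * ln (G y))" for x
  define E where "E x = (A x * ln (G x) - B x) / G x" for x
  define K where "K x = A x - A x * ln (G x) + B x" for x
  have Gint: "G integrable_on {0..v}" for v
    by (rule integrable_on_mono_on) (use Gm in \<open>auto simp: mono_on_def mono_def\<close>)
  have pw: "G y / c * ln (G y / c) = (1/c) * (G y * ln (G y)) - (ln c / c) * G y" if "c > 0" for y c
  proof (cases "G y = 0")
    case False
    then have "G y > 0" using G0[of y] by simp
    then show ?thesis using that by (simp add: ln_div field_simps)
  qed simp
  have Lint2: "(\<lambda>y. G y * ln (G y)) integrable_on {0..v}" if "0 < v" "0 < G v" for v
  proof -
    have "(\<lambda>y. G v * (G y / G v * ln (G y / G v)) + ln (G v) * G y) integrable_on {0..v}"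
      by (intro integrable_add integrable_on_mult_right Lint that Gint)
    moreover have "G v * (G y / G v * ln (G y / G v)) + ln (G v) * G y = G y * ln (G y)" for y
      using pw[of "G v" y] that by (simp add: field_simps)
    ultimately show ?thesis by simp
  qed
  have rep: "- integral {0..x} (\<lambda>y. G y / G x * ln (G y / G x)) = E x" if "0 < x" "0 < G x" for x
  proof -
    have "integral {0..x} (\<lambda>y. G y / G x * ln (G y / G x)) =
          integral {0..x} (\<lambda>y. (1/G x) * (G y * ln (G y)) - (ln (G x) / G x) * G y)"
      using pw[of "G x"] that by simp
    also have "\<dots> = (1/G x) * B x - (ln (G x) / G x) * A x"
      unfolding A_def B_def
      using integral_diff[OF integrable_on_mult_right[OF Lint2[OF that], of "1/G x"]
              integrable_on_mult_right[OF Gint, of "ln (G x) / G x"]]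
      by simp
    finally show ?thesis unfolding E_def using that by (simp add: field_simps)
  qed
  define S where "S = {x. 0 < x \<and> 0 < G x}"
  define a where "a = Inf S"
  have tS: "t \<in> S" using t by (simp add: S_def)
  have bdd: "bdd_below S" unfolding S_def by (rule bdd_belowI[of _ 0]) auto
  have a0: "0 \<le> a" unfolding a_def using tS by (intro cInf_greatest) (auto simp: S_def)
  have at: "a \<le> t" unfolding a_def using tS bdd by (rule cInf_lower)
  have pos: "0 < x \<and> 0 < G x" if "a < x" for x
  proof -
    from that have "Inf S < x" by (simp add: a_def)
    then obtain y where "y \<in> S" "y < x" using cInf_less_iff[of S x] tS bdd by auto
    then show ?thesis using monoD[OF Gm, of y x] by (auto simp: S_def)
  qed
  have zero: "G y = 0" if "0 \<le> y" "y < a" for y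
  proof -
    have Z: "G z = 0" if "0 < z" "z < a" for z
    proof (rule ccontr)
      assume "G z \<noteq> 0"
      then have "z \<in> S" using G0[of z] that by (auto simp: S_def)
      then have "a \<le> z" unfolding a_def using bdd by (rule cInf_lower)
      then show False using that by simp
    qed
    show ?thesis
    proof (cases "y = 0")
      case True
      have "G y \<le> G (a/2)" using monoD[OF Gm] True a0 that by auto
      also have "\<dots> = 0" using Z that True by auto
      finally show ?thesis using G0[of y] by simp
    qed (use Z that in auto)
  qed
  have ta: "a < t"
  proof (rule ccontr)
    assume "\<not> a < t"
    then have "a = t" using at by simp
    have "continuous (at t) G" using Gd[OF t(1)] by (rule differentiable_imp_continuous_within)
    then obtain d where d: "d > 0" "\<And>y. dist y t < d \<Longrightarrow> dist (G y) (G t) < G t"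
      unfolding continuous_at_eps_delta using t(2) by blast
    define y where "y = max (t/2) (t - d/2)"
    have "0 \<le> y" "y < a" "dist y t < d" using d t \<open>a = t\<close> by (auto simp: y_def dist_real_def)
    with d(2)[of y] zero[of y] show False by (simp add: dist_real_def)
  qed
  have derivs: "\<exists>g. DERIV G x :> g \<and> 0 \<le> g \<and> DERIV A x :> G x \<and> DERIV B x :> G x * ln (G x)
       \<and> 0 \<le> G x * G x - A x * g" if "a < x" for x
  proof -
    have x: "0 < x" "0 < G x" using pos[OF that] by auto
    obtain g where g: "DERIV G x :> g" using Gd[OF x(1)] by (auto simp: real_differentiable_def)
    have g0: "0 \<le> g" by (rule deriv_nonneg_of_right_mono[OF g]) (use monoD[OF Gm] in auto)
    have cG: "continuous (at x) G" using Gd[OF x(1)] by (rule differentiable_imp_continuous_within)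
    have ilx: "at x within {0..x+1} = at x" using x by (intro at_within_Icc_at) auto
    have dA: "DERIV A x :> G x"
    proof -
      have "((\<lambda>u. integral {0..u} G) has_vector_derivative G x) (at x within ({0..x+1} - {}))"
        by (rule integral_has_vector_derivative_continuous_at[OF Gint]) (use x cG ilx in \<open>auto intro: continuous_at_imp_continuous_within\<close>)
      then show ?thesis using ilx unfolding A_def by (simp add: has_real_derivative_iff_has_vector_derivative)
    qed
    have Gx1: "0 < G (x+1)" using x monoD[OF Gm, of x "x+1"] by simp
    have cL: "continuous (at x) (\<lambda>y. G y * ln (G y))"
      using cG x by (intro continuous_intros) auto
    have dB: "DERIV B x :> G x * ln (G x)"
    proof -
      have "((\<lambda>u. integral {0..u} (\<lambda>y. G y * ln (G y))) has_vector_derivative G x * ln (G x)) (at x within ({0..x+1} - {}))"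
        by (rule integral_has_vector_derivative_continuous_at[OF Lint2]) (use x Gx1 cL ilx in \<open>auto intro: continuous_at_imp_continuous_within\<close>)
      then show ?thesis using ilx unfolding B_def by (simp add: has_real_derivative_iff_has_vector_derivative)
    qed
    have dm: "DERIV (\<lambda>y. A y / G y) x :> (G x * G x - A x * g) / (G x * G x)"
      using dA g x by (auto intro!: derivative_eq_intros simp: field_simps)
    have "0 \<le> (G x * G x - A x * g) / (G x * G x)"
    proof (rule deriv_nonneg_of_right_mono[OF dm])
      fix h :: real assume "0 < h"
      then show "A x / G x \<le> A (x + h) / G (x + h)" unfolding A_def using mm[OF x] by simp
    qed
    then have "0 \<le> (G x * G x - A x * g) / (G x * G x) * (G x * G x)"
      using x by (intro mult_nonneg_nonneg) auto
    then have "0 \<le> G x * G x - A x * g" using x by simp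
    then show ?thesis using g g0 dA dB by blast
  qed
  have dK: "\<exists>k. DERIV K x :> k \<and> 0 \<le> k" if xa: "a < x" for x
  proof -
    have x: "0 < x" "0 < G x" using pos[OF xa] by auto
    obtain g where g: "DERIV G x :> g" "0 \<le> g" "DERIV A x :> G x" "DERIV B x :> G x * ln (G x)"
      "0 \<le> G x * G x - A x * g" using derivs[OF xa] by blast
    have "DERIV K x :> (G x * G x - A x * g) / G x"
      unfolding K_def[abs_def] using g x by (auto intro!: derivative_eq_intros simp: field_simps)
    then show ?thesis using g(5) x by auto
  qed
  have Kinc: "K v \<le> K u" if "a < v" "v \<le> u" for u v
    by (rule DERIV_nonneg_imp_nondecreasing[OF that(2)]) (use dK that in auto)
  have Klow: "-(v - a) \<le> K v" if "a < v" for v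
  proof -
    have v: "0 < v" "0 < G v" using pos[OF that] by auto
    have "0 \<le> A v" unfolding A_def using Gint G0 by (intro integral_nonneg) auto
    moreover have "ln (G v) \<le> 0" using v G1[of v] by simp
    ultimately have "0 \<le> A v - A v * ln (G v)" using mult_nonneg_nonpos[of "A v" "ln (G v)"] by linarith
    moreover have "-(v - a) \<le> B v"
    proof -
      define h where "h y = (if y < a then 0 else (-1::real))" for y
      have h1: "(h has_integral 0) {0..a}"
        by (rule has_integral_spike_finite[where S="{a}" and f="\<lambda>_. 0"]) (auto simp: h_def)
      have h2: "(h has_integral (-1) * (v - a)) {a..v}"
        by (rule has_integral_spike_finite[where S="{}" and f="\<lambda>_. -1"]) (use that has_integral_const_real[of "-1::real" a v] in \<open>auto simp: h_def\<close>)
      have hi: "(h has_integral (0 + (-1) * (v - a))) {0..v}"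
        by (rule has_integral_combine[OF _ _ h1 h2]) (use a0 that in auto)
      have "integral {0..v} h \<le> B v" unfolding B_def
      proof (rule integral_le)
        show "h integrable_on {0..v}" using hi by blast
        show "(\<lambda>y. G y * ln (G y)) integrable_on {0..v}" using Lint2 v by blast
        fix y assume "y \<in> {0..v}"
        then show "h y \<le> G y * ln (G y)" using zero[of y] xlnx_ge[OF G0 G1] by (auto simp: h_def)
      qed
      then show ?thesis using integral_unique[OF hi] by simp
    qed
    ultimately show ?thesis unfolding K_def by simp
  qed
  have Kpos: "0 \<le> K u" if ua: "a < u" for u
  proof (rule ccontr)
    assume "\<not> 0 \<le> K u"
    then have Ku: "K u < 0" by simp
    define v where "v = min u (a + (- K u) / 2)"
    have "a < v" "v \<le> u" using ua Ku by (auto simp: v_def)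
    then have "K v \<le> K u" "-(v - a) \<le> K v" using Kinc Klow by auto
    moreover have "v - a \<le> (- K u) / 2" by (simp add: v_def)
    ultimately show False using Ku by linarith
  qed
  have dE: "\<exists>e. DERIV E x :> e \<and> 0 \<le> e" if xa: "a < x" for x
  proof -
    have x: "0 < x" "0 < G x" using pos[OF xa] by auto
    obtain g where g: "DERIV G x :> g" "0 \<le> g" "DERIV A x :> G x" "DERIV B x :> G x * ln (G x)"
      using derivs[OF xa] by blast
    have "DERIV E x :> g * K x / (G x * G x)"
      unfolding E_def[abs_def] K_def using g x by (auto intro!: derivative_eq_intros simp: field_simps)
    then show ?thesis using g(2) Kpos[OF xa] x by auto
  qed
  have "E t \<le> E s"
    by (rule DERIV_nonneg_imp_nondecreasing[OF t(3)]) (use dE ta in auto)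
  moreover have "0 < G s" using t monoD[OF Gm, of t s] by simp
  ultimately show ?thesis using rep[of t] rep[of s] t by simp
qed

theorem mainTheorem7:
  fixes M :: "'a measure" and X1 X2 :: "'a \<Rightarrow> real" and i :: nat
  assumes "prob_space M"
    and "X1 \<in> borel_measurable M" and "X2 \<in> borel_measurable M"
    and "absolutely_continuous lborel (distr M (lborel :: (real \<times> real) measure) (\<lambda>\<omega>. (X1 \<omega>, X2 \<omega>)))"
    and "AE \<omega> in M. 0 \<le> X1 \<omega> \<and> 0 \<le> X2 \<omega>"
    and "\<forall>p. 0 < fst p \<and> 0 < snd p \<longrightarrow>
           (\<lambda>q. joint_cdf M X1 X2 (fst q) (snd q)) differentiable (at p)"
    and "i \<in> {1, 2}"
    and "\<forall>t1 t2. 0 < t1 \<and> 0 < t2 \<and> joint_cdf M X1 X2 t1 t2 > 0 \<longrightarrow>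
           cdcpe_integrand (joint_cdf M X1 X2) i t1 t2 integrable_on {0..coord i t1 t2}"
    and "incr_in (joint_cdf M X1 X2) i (eit (joint_cdf M X1 X2) i)"
  shows "incr_in (joint_cdf M X1 X2) i (cdcpe (joint_cdf M X1 X2) i)"
proof -
  interpret prob_space M by (rule assms(1))
  define F where "F = joint_cdf M X1 X2"
  have meas: "{\<omega> \<in> space M. X1 \<omega> \<le> x \<and> X2 \<omega> \<le> y} \<in> sets M" for x y
    using assms(2,3) by measurable
  have F0: "0 \<le> F x y" for x y by (simp add: F_def joint_cdf_def)
  have F1: "F x y \<le> 1" for x y by (simp add: F_def joint_cdf_def)
  have Fm: "F x y \<le> F x' y'" if "x \<le> x'" "y \<le> y'" for x y x' y'
    unfolding F_def joint_cdf_def using that by (intro finite_measure_mono meas) auto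
  have Fd: "(\<lambda>q. F (fst q) (snd q)) differentiable (at p)" if "0 < fst p" "0 < snd p" for p
    using assms(6) that unfolding F_def by blast
  have hd: "(\<lambda>q. F (fst q) (snd q)) \<circ> f differentiable (at x)"
    if "f differentiable (at x)" "0 < fst (f x)" "0 < snd (f x)" for f :: "real \<Rightarrow> real \<times> real" and x
    by (rule differentiable_chain_at[OF that(1) Fd]) (use that in auto)
  show ?thesis
  proof (cases "i = 1")
    case True
    show ?thesis unfolding incr_in_def F_def[symmetric]
    proof (intro allI impI)
      fix t1 t2 s assume H: "0 < t1 \<and> 0 < t2 \<and> 0 < F t1 t2 \<and> coord i t1 t2 \<le> s"
      define G where "G x = F x t2" for x
      have "- integral {0..t1} (\<lambda>y. G y / G t1 * ln (G y / G t1)) \<le> - integral {0..s} (\<lambda>y. G y / G s * ln (G y / G s))"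
      proof (rule core)
        show "0 \<le> G x" "G x \<le> 1" for x using F0 F1 by (auto simp: G_def)
        show "mono G" by (auto simp: mono_def G_def intro: Fm)
        show "G differentiable (at x)" if "0 < x" for x
        proof -
          have "(\<lambda>q. F (fst q) (snd q)) \<circ> (\<lambda>x. (x, t2)) differentiable (at x)"
            by (rule hd) (use that H in auto)
          then show ?thesis by (simp add: o_def G_def[abs_def])
        qed
        show "(\<lambda>y. G y / G v * ln (G y / G v)) integrable_on {0..v}" if "0 < v" "0 < G v" for v
          using assms(8)[rule_format, of v t2] that H True
          by (simp add: F_def[symmetric] G_def cdcpe_integrand_def[abs_def] sec_def coord_def)
        show "integral {0..t} G / G t \<le> integral {0..s} G / G s" if "0 < t" "0 < G t" "t \<le> s" for t s
          using assms(9) that H True unfolding incr_in_def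
          by (auto simp: F_def[symmetric] G_def[abs_def] eit_def sec_def[abs_def] coord_def upd_coord_def)
      qed (use H True in \<open>auto simp: G_def coord_def\<close>)
      then show "cdcpe F i t1 t2 \<le> case_prod (cdcpe F i) (upd_coord i t1 t2 s)"
        using True by (simp add: cdcpe_def cdcpe_integrand_def[abs_def] sec_def coord_def upd_coord_def G_def)
    qed
  next
    case False
    then have i2: "i = 2" using assms(7) by auto
    show ?thesis unfolding incr_in_def F_def[symmetric]
    proof (intro allI impI)
      fix t1 t2 s assume H: "0 < t1 \<and> 0 < t2 \<and> 0 < F t1 t2 \<and> coord i t1 t2 \<le> s"
      define G where "G x = F t1 x" for x
      have "- integral {0..t2} (\<lambda>y. G y / G t2 * ln (G y / G t2)) \<le> - integral {0..s} (\<lambda>y. G y / G s * ln (G y / G s))"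
      proof (rule core)
        show "0 \<le> G x" "G x \<le> 1" for x using F0 F1 by (auto simp: G_def)
        show "mono G" by (auto simp: mono_def G_def intro: Fm)
        show "G differentiable (at x)" if "0 < x" for x
        proof -
          have "(\<lambda>q. F (fst q) (snd q)) \<circ> (\<lambda>x. (t1, x)) differentiable (at x)"
            by (rule hd) (use that H in auto)
          then show ?thesis by (simp add: o_def G_def[abs_def])
        qed
        show "(\<lambda>y. G y / G v * ln (G y / G v)) integrable_on {0..v}" if "0 < v" "0 < G v" for v
          using assms(8)[rule_format, of t1 v] that H i2
          by (simp add: F_def[symmetric] G_def cdcpe_integrand_def[abs_def] sec_def coord_def)
        show "integral {0..t} G / G t \<le> integral {0..s} G / G s" if "0 < t" "0 < G t" "t \<le> s" for t s
          using assms(9) that H i2 unfolding incr_in_def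
          by (auto simp: F_def[symmetric] G_def[abs_def] eit_def sec_def[abs_def] coord_def upd_coord_def)
      qed (use H i2 in \<open>auto simp: G_def coord_def\<close>)
      then show "cdcpe F i t1 t2 \<le> case_prod (cdcpe F i) (upd_coord i t1 t2 s)"
        using i2 by (simp add: cdcpe_def cdcpe_integrand_def[abs_def] sec_def coord_def upd_coord_def G_def)
    qed
  qed
qed

end
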